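(* Let $\alpha,\mu,\gamma>0$, $\beta=\alpha+\gamma>\mu$, and consider \[ \dot L=\alpha L C-\mu L+\gamma R C,\qquad \dot R=\alpha R C-\mu R+\gamma L C,\qquad C=1-L-R. \] The interior equilibrium $E_1=(P^*,P^* )$, $P^*=\tfrac12(1-\mu/\beta)$, is locally asymptotically stable, and the eigenvalues of the Jacobian at $E_1$ are \[ \lambda_1=\mu-\beta<0,\qquad \lambda_2=-\frac{2\gamma\mu}{\beta}<0. \] When $\lambda_1\ne\lambda_2$, $E_1$ is a stable node; the eigenvalues coincide exactly on the locus $2\gamma\mu=\beta(\beta-\mu)$, where $E_1$ is a stable star. *)

theory Defs
  imports "HOL-Analysis.Analysis"
begin

definition lrc_field :: "real \<Rightarrow> real \<Rightarrow> real \<Rightarrow> real^2 \<Rightarrow> real^2" where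
  "lrc_field \<alpha> \<mu> \<gamma> z =
     (let L = z$1; R = z$2; C = 1 - L - R
      in vector [\<alpha>*L*C - \<mu>*L + \<gamma>*R*C, \<alpha>*R*C - \<mu>*R + \<gamma>*L*C])"

definition is_solution :: "(real^2 \<Rightarrow> real^2) \<Rightarrow> (real \<Rightarrow> real^2) \<Rightarrow> real set \<Rightarrow> bool" where
  "is_solution F x I \<longleftrightarrow> (\<forall>t\<in>I. (x has_vector_derivative F (x t)) (at t within I))"

definition loc_asymp_stable :: "(real^2 \<Rightarrow> real^2) \<Rightarrow> real^2 \<Rightarrow> bool" where
  "loc_asymp_stable F e \<longleftrightarrow>
     (\<forall>\<epsilon>>0. \<exists>\<delta>>0. \<forall>x T. is_solution F x {0..T} \<and> dist (x 0) e < \<delta>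
         \<longrightarrow> (\<forall>t\<in>{0..T}. dist (x t) e < \<epsilon>)) \<and>
     (\<exists>\<eta>>0. \<forall>x. is_solution F x {0..} \<and> dist (x 0) e < \<eta> \<longrightarrow> (x \<longlongrightarrow> e) at_top)"

definition eigenvalues2 :: "real^2^2 \<Rightarrow> real \<Rightarrow> real \<Rightarrow> bool" where
  "eigenvalues2 J l1 l2 \<longleftrightarrow> (\<forall>x. det (mat x - J) = (x - l1) * (x - l2))"

text \<open>Linearization classification: stable node = two distinct real negative eigenvalues;
  stable star = repeated negative eigenvalue with J = l I (two independent eigenvectors).\<close>
definition stable_node :: "real^2^2 \<Rightarrow> bool" where
  "stable_node J \<longleftrightarrow> (\<exists>l1 l2. l1 < 0 \<and> l2 < 0 \<and> l1 \<noteq> l2 \<and> eigenvalues2 J l1 l2)"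

definition stable_star :: "real^2^2 \<Rightarrow> bool" where
  "stable_star J \<longleftrightarrow> (\<exists>l<0. J = mat l)"

end

theory Submission
  imports Defs
begin


lemma vnth_deriv[derivative_intros]:
  "((\<lambda>z::real^2. z $ i) has_derivative (\<lambda>h. h $ i)) F"
  using bounded_linear_vec_nth by (rule bounded_linear_imp_has_derivative)

lemma lrc_comp: "lrc_field a m g z $ 1 = a*(z$1)*(1-z$1-z$2) - m*(z$1) + g*(z$2)*(1-z$1-z$2)"
  "lrc_field a m g z $ 2 = a*(z$2)*(1-z$1-z$2) - m*(z$2) + g*(z$1)*(1-z$1-z$2)"
  by (simp_all add: lrc_field_def Let_def)

lemma lrc_deriv:
  fixes a m g L R :: real
  defines "C \<equiv> 1 - L - R"
  defines "M \<equiv> vector [vector [a*C - a*L - m - g*R, - a*L + g*C - g*R],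
                       vector [- a*R + g*C - g*L, a*C - a*R - m - g*L]] :: real^2^2"
  shows "(lrc_field a m g has_derivative (\<lambda>h. M *v h)) (at (vector [L, R]))"
proof -
  have B: "i \<in> (Basis :: (real^2) set) \<Longrightarrow> i = axis 1 1 \<or> i = axis 2 1" for i
    by (auto simp: Basis_vec_def) (metis exhaust_2)
  have c1: "((\<lambda>z. lrc_field a m g z $ 1) has_derivative (\<lambda>h. (M *v h) $ 1)) (at (vector [L, R]))"
    unfolding lrc_comp
    apply (rule has_derivative_eq_rhs)
     apply (rule derivative_eq_intros refl)+
    apply (rule ext)
    apply (simp add: M_def C_def matrix_vector_mul_component inner_vec_def sum_2 algebra_simps)
    done
  have c2: "((\<lambda>z. lrc_field a m g z $ 2) has_derivative (\<lambda>h. (M *v h) $ 2)) (at (vector [L, R]))"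
    unfolding lrc_comp
    apply (rule has_derivative_eq_rhs)
     apply (rule derivative_eq_intros refl)+
    apply (rule ext)
    apply (simp add: M_def C_def matrix_vector_mul_component inner_vec_def sum_2 algebra_simps)
    done
  show ?thesis
    apply (subst has_derivative_componentwise_within)
  proof
    fix i :: "real^2" assume "i \<in> Basis"
    then consider "i = axis 1 1" | "i = axis 2 1" using B by blast
    then show "((\<lambda>x. lrc_field a m g x \<bullet> i) has_derivative (\<lambda>x. (M *v x) \<bullet> i)) (at (vector [L, R]))"
      by cases (use c1 c2 in \<open>simp_all add: inner_axis\<close>)
  qed
qed



lemma sol_cont: "is_solution F x I \<Longrightarrow> continuous_on I x"
  unfolding is_solution_def by (rule continuous_on_vector_derivative) auto

lemma W_deriv:
  fixes x :: "real \<Rightarrow> real^2"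
  assumes "(x has_vector_derivative x') (at t)"
  shows "((\<lambda>t. inner (x t - e) (x t - e)) has_real_derivative 2 * inner (x t - e) x') (at t)"
proof -
  have d: "(x has_derivative (\<lambda>h. h *\<^sub>R x')) (at t)"
    using assms by (simp add: has_vector_derivative_def)
  have "((\<lambda>t. inner (x t - e) (x t - e)) has_derivative
     (\<lambda>h. inner (x t - e) (h *\<^sub>R x' - 0) + inner (h *\<^sub>R x' - 0) (x t - e))) (at t)"
    by (intro derivative_intros d)
  then show ?thesis
    unfolding has_field_derivative_def
    by (rule has_derivative_eq_rhs) (auto simp: inner_commute algebra_simps)
qed

lemma stay:
  fixes F :: "real^2 \<Rightarrow> real^2" and e :: "real^2"
  assumes neg: "\<And>z. dist z e \<le> r \<Longrightarrow> inner (z - e) (F z) \<le> 0"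
    and sol: "is_solution F x {0..T}" and x0: "dist (x 0) e < \<delta>" and dr: "\<delta> \<le> r"
  shows "\<forall>t\<in>{0..T}. dist (x t) e < \<delta>"
proof (rule ccontr)
  assume "\<not> ?thesis"
  then obtain t1 where t1: "t1 \<in> {0..T}" "\<delta> \<le> dist (x t1) e" by (auto simp: not_less)
  define A where "A = {0..T} \<inter> (\<lambda>t. dist (x t) e) -` {\<delta>..}"
  have cx: "continuous_on {0..T} x" using sol by (rule sol_cont)
  have cA: "closed A" unfolding A_def
    by (rule continuous_closed_preimage) (auto intro!: continuous_intros cx)
  have ne: "A \<noteq> {}" using t1 by (auto simp: A_def)
  have bb: "bdd_below A" by (auto simp: A_def bdd_below_def)
  define t0 where "t0 = Inf A"
  have t0A: "t0 \<in> A" using closed_contains_Inf[OF ne bb cA] by (simp add: t0_def)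
  have low: "\<And>s. s \<in> A \<Longrightarrow> t0 \<le> s" unfolding t0_def using bb by (simp add: cInf_lower)
  have t0T: "0 \<le> t0" "t0 \<le> T" and dt0: "\<delta> \<le> dist (x t0) e" using t0A by (auto simp: A_def)
  have t0pos: "0 < t0" using t0T dt0 x0 by (cases "t0 = 0") auto
  have small: "dist (x s) e < \<delta>" if "0 \<le> s" "s < t0" for s
    using low[of s] that t0T by (force simp: A_def)
  let ?W = "\<lambda>t. inner (x t - e) (x t - e)"
  have "?W t0 \<le> ?W 0"
  proof (rule DERIV_nonpos_imp_decreasing_open[OF less_imp_le[OF t0pos]])
    fix s assume s: "0 < s" "s < t0"
    have "(x has_vector_derivative F (x s)) (at s within {0..T})"
      using sol s t0T unfolding is_solution_def by auto
    moreover have "at s within {0..T} = at s"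
      using s t0T by (intro at_within_Icc_at) auto
    ultimately have "(x has_vector_derivative F (x s)) (at s)" by simp
    then have "(?W has_real_derivative 2 * inner (x s - e) (F (x s))) (at s)" by (rule W_deriv)
    moreover have "inner (x s - e) (F (x s)) \<le> 0"
      using neg small[of s] s dr by auto
    ultimately show "\<exists>y. (?W has_real_derivative y) (at s) \<and> y \<le> 0" by auto
  next
    have "continuous_on {0..t0} x" by (rule continuous_on_subset[OF cx]) (use t0T in auto)
    then show "continuous_on {0..t0} ?W" by (intro continuous_intros)
  qed
  moreover have "?W t = (dist (x t) e)\<^sup>2" for t
    by (simp add: dist_norm power2_norm_eq_inner)
  ultimately have "(dist (x t0) e)\<^sup>2 \<le> (dist (x 0) e)\<^sup>2" by simp
  then have "dist (x t0) e \<le> dist (x 0) e" by simp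
  then show False using x0 dt0 by linarith
qed

lemma sol_restrict: "is_solution F x I \<Longrightarrow> J \<subseteq> I \<Longrightarrow> is_solution F x J"
  unfolding is_solution_def by (auto intro: has_vector_derivative_within_subset)

lemma decay:
  fixes F :: "real^2 \<Rightarrow> real^2" and e :: "real^2"
  assumes neg: "\<And>z. dist z e \<le> r \<Longrightarrow> inner (z - e) (F z) \<le> - c * inner (z - e) (z - e)"
    and c: "c > 0"
    and sol: "is_solution F x {0..}" and x0: "dist (x 0) e < r"
  shows "(x \<longlongrightarrow> e) at_top"
proof -
  let ?W = "\<lambda>t. inner (x t - e) (x t - e)"
  have neg0: "inner (z - e) (F z) \<le> 0" if "dist z e \<le> r" for z
  proof -
    have "0 \<le> c * inner (z - e) (z - e)" using c by simp
    then show ?thesis using neg[OF that] by linarith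
  qed
  have inr: "dist (x t) e < r" if "0 \<le> t" for t
    using stay[OF neg0 sol_restrict[OF sol, of "{0..t}"] x0 order_refl] that by auto
  have bound: "?W t \<le> ?W 0 * exp (- 2 * c * t)" if t: "0 \<le> t" for t
  proof -
    let ?g = "\<lambda>s. exp (2 * c * s) * ?W s"
    have "?g t \<le> ?g 0"
    proof (rule DERIV_nonpos_imp_decreasing_open[OF t])
      fix s assume s: "0 < s" "s < t"
      have "(x has_vector_derivative F (x s)) (at s within {0<..})"
      proof (rule has_vector_derivative_within_subset)
        show "(x has_vector_derivative F (x s)) (at s within {0..})"
          using sol s unfolding is_solution_def by auto
      qed auto
      then have "(x has_vector_derivative F (x s)) (at s)"
        using s by (subst (asm) has_vector_derivative_within_open) auto
      then have dW: "(?W has_real_derivative 2 * inner (x s - e) (F (x s))) (at s)" by (rule W_deriv)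
      have de: "((\<lambda>s. exp (2 * c * s)) has_real_derivative exp (2 * c * s) * (2 * c)) (at s)"
        by (auto intro!: derivative_eq_intros)
      have "(?g has_real_derivative
          exp (2 * c * s) * (2 * c) * ?W s + 2 * inner (x s - e) (F (x s)) * exp (2 * c * s)) (at s)"
        by (rule DERIV_mult[OF de dW])
      moreover have "exp (2 * c * s) * (2 * c) * ?W s + 2 * inner (x s - e) (F (x s)) * exp (2 * c * s)
         = (2 * c * exp (2 * c * s)) * ?W s + exp (2 * c * s) * (2 * inner (x s - e) (F (x s)))"
        by (simp add: algebra_simps)
      ultimately have "(?g has_real_derivative
          (2 * c * exp (2 * c * s)) * ?W s + exp (2 * c * s) * (2 * inner (x s - e) (F (x s)))) (at s)"
        by simp
      moreover have "inner (x s - e) (F (x s)) \<le> - c * ?W s"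
        using neg[of "x s"] inr[of s] s by auto
      then have "(2 * c * exp (2 * c * s)) * ?W s + exp (2 * c * s) * (2 * inner (x s - e) (F (x s))) \<le> 0"
      proof -
        assume h: "inner (x s - e) (F (x s)) \<le> - c * ?W s"
        have "exp (2 * c * s) * (2 * inner (x s - e) (F (x s))) \<le> exp (2 * c * s) * (2 * (- c * ?W s))"
          using h by (intro mult_left_mono) auto
        then show ?thesis by (simp add: algebra_simps)
      qed
      ultimately show "\<exists>y. (?g has_real_derivative y) (at s) \<and> y \<le> 0" by blast
    next
      have "continuous_on {0..t} x"
        by (rule continuous_on_subset[OF sol_cont[OF sol]]) auto
      then show "continuous_on {0..t} ?g" by (intro continuous_intros)
    qed
    then have "exp (2 * c * t) * ?W t \<le> ?W 0" by simp
    then have h1: "exp (- 2 * c * t) * (exp (2 * c * t) * ?W t) \<le> exp (- 2 * c * t) * ?W 0"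
      by (intro mult_left_mono) auto
    have h2: "exp (- 2 * c * t) * (exp (2 * c * t) * ?W t) = ?W t"
      by (simp add: mult.assoc[symmetric] exp_add[symmetric])
    have "?W t \<le> exp (- 2 * c * t) * ?W 0" using h1 h2 by linarith
    then show ?thesis by (simp only: mult.commute)
  qed
  have lim0: "((\<lambda>t. ?W 0 * exp (- 2 * c * t)) \<longlongrightarrow> 0) at_top"
  proof -
    have "LIM t at_top. (- 2 * c) * t :> at_bot"
      using c by (intro filterlim_tendsto_neg_mult_at_bot[OF tendsto_const _ filterlim_ident]) auto
    then have "((\<lambda>t. exp ((- 2 * c) * t)) \<longlongrightarrow> 0) at_top"
      by (rule filterlim_compose[OF exp_at_bot])
    then show ?thesis by (rule tendsto_mult_right_zero)
  qed
  have "(?W \<longlongrightarrow> 0) at_top"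
  proof (rule tendsto_sandwich[OF _ _ tendsto_const lim0])
    show "\<forall>\<^sub>F t in at_top. 0 \<le> ?W t" by simp
    show "\<forall>\<^sub>F t in at_top. ?W t \<le> ?W 0 * exp (- 2 * c * t)"
    proof (rule eventually_mono[OF eventually_ge_at_top[of "0::real"]])
      fix t :: real assume "0 \<le> t"
      then show "?W t \<le> ?W 0 * exp (- 2 * c * t)" using bound by blast
    qed
  qed
  then have "((\<lambda>t. sqrt (?W t)) \<longlongrightarrow> sqrt 0) at_top" by (rule tendsto_real_sqrt)
  moreover have "sqrt (?W t) = dist (x t) e" for t
    by (simp add: dist_norm norm_eq_sqrt_inner)
  ultimately have "((\<lambda>t. dist (x t) e) \<longlongrightarrow> 0) at_top" by simp
  then show ?thesis by (subst tendsto_dist_iff)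
qed



lemma key_ineq:
  fixes \<alpha> \<mu> \<gamma> \<beta> P L R \<rho> c :: real
  assumes a: "\<alpha> > 0" "\<mu> > 0" "\<gamma> > 0" and b: "\<beta> = \<alpha> + \<gamma>" "\<beta> > \<mu>"
    and P: "P = (1 - \<mu> / \<beta>) / 2"
    and rho: "\<rho> = min P (\<gamma> * \<mu> / (\<beta> * (\<bar>\<alpha> - \<gamma>\<bar> + 1)))"
    and c: "c = min ((\<beta> - \<mu>) / 2) (\<gamma> * \<mu> / \<beta>)"
    and W: "(L - P)^2 + (R - P)^2 \<le> (\<rho>/2)^2"
  shows "(L - P) * (\<alpha>*L*(1-L-R) - \<mu>*L + \<gamma>*R*(1-L-R)) + (R - P) * (\<alpha>*R*(1-L-R) - \<mu>*R + \<gamma>*L*(1-L-R))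
     \<le> - c * ((L - P)^2 + (R - P)^2)"
proof -
  have bpos: "\<beta> > 0" using a b by simp
  have hmu: "\<mu> = \<beta> * (1 - 2 * P)" using bpos by (simp add: P field_simps)
  have Ppos: "P > 0" using bpos b by (simp add: P field_simps)
  define u where "u = L + R - 2 * P"
  define v where "v = L - R"
  define S where "S = L + R"
  define k where "k = (\<alpha> - \<gamma>) * (1 - S) - \<mu>"
  have ident: "(L - P) * (\<alpha>*L*(1-L-R) - \<mu>*L + \<gamma>*R*(1-L-R)) + (R - P) * (\<alpha>*R*(1-L-R) - \<mu>*R + \<gamma>*L*(1-L-R))
      = (- \<beta> * S * u^2 + k * v^2) / 2"
    unfolding u_def v_def S_def k_def hmu b(1) by (simp add: power2_eq_square algebra_simps)
  have Wuv: "(L - P)^2 + (R - P)^2 = (u^2 + v^2) / 2"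
    unfolding u_def v_def by (simp add: power2_eq_square algebra_simps)
  have q1: "\<gamma> * \<mu> / (\<beta> * (\<bar>\<alpha> - \<gamma>\<bar> + 1)) > 0" using a bpos by simp
  have rpos: "\<rho> > 0" using Ppos q1 rho by simp
  have "u^2 \<le> 2 * ((u^2 + v^2) / 2)" by simp
  also have "\<dots> \<le> 2 * (\<rho>/2)^2" using W Wuv by simp
  also have "\<dots> \<le> \<rho>^2" by (simp add: power2_eq_square)
  finally have "u^2 \<le> \<rho>^2" .
  then have ua: "\<bar>u\<bar> \<le> \<rho>" using rpos by (simp add: abs_le_square_iff[symmetric])
  have "S \<ge> P" using ua rho unfolding S_def u_def by linarith
  then have "\<beta> * S \<ge> \<beta> * P" using bpos by simp
  moreover have "\<beta> * P = (\<beta> - \<mu>) / 2" using bpos by (simp add: P field_simps)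
  ultimately have bS: "\<beta> * S \<ge> c" using c by linarith
  have "\<bar>\<alpha> - \<gamma>\<bar> * \<bar>u\<bar> \<le> \<bar>\<alpha> - \<gamma>\<bar> * (\<gamma> * \<mu> / (\<beta> * (\<bar>\<alpha> - \<gamma>\<bar> + 1)))"
    using ua rho by (intro mult_left_mono) auto
  also have "\<dots> = (\<gamma> * \<mu> / \<beta>) * (\<bar>\<alpha> - \<gamma>\<bar> / (\<bar>\<alpha> - \<gamma>\<bar> + 1))"
    by (simp add: field_simps)
  also have "\<dots> \<le> (\<gamma> * \<mu> / \<beta>) * 1"
    using a bpos by (intro mult_left_mono) auto
  finally have au: "\<bar>(\<alpha> - \<gamma>) * u\<bar> \<le> \<gamma> * \<mu> / \<beta>" by (simp add: abs_mult)
  have "k = (\<alpha> - \<gamma>) * \<mu> / \<beta> - \<mu> - (\<alpha> - \<gamma>) * u"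
    unfolding k_def S_def u_def using bpos by (simp add: P field_simps)
  also have "(\<alpha> - \<gamma>) * \<mu> / \<beta> - \<mu> = - 2 * (\<gamma> * \<mu> / \<beta>)"
    using bpos b by (simp add: field_simps)
  finally have "k \<le> - (\<gamma> * \<mu> / \<beta>)" using au by linarith
  then have kc: "k \<le> - c" using c by linarith
  have "- \<beta> * S * u^2 \<le> - c * u^2" using bS by (intro mult_right_mono) auto
  moreover have "k * v^2 \<le> - c * v^2" using kc by (intro mult_right_mono) auto
  ultimately have "(- \<beta> * S * u^2 + k * v^2) / 2 \<le> - c * ((u^2 + v^2) / 2)"
    by (simp add: field_simps)
  then show ?thesis by (simp only: ident Wuv)
qed


theorem theorem3p8:
  fixes \<alpha> \<mu> \<gamma> \<beta> P :: real and E1 :: "real^2" and J :: "real^2^2"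
  assumes "\<alpha> > 0" "\<mu> > 0" "\<gamma> > 0"
    and "\<beta> = \<alpha> + \<gamma>" "\<beta> > \<mu>"
    and "P = (1 - \<mu> / \<beta>) / 2"
    and "E1 = vector [P, P]"
    and "J = jacobian (lrc_field \<alpha> \<mu> \<gamma>) (at E1)"
  shows "lrc_field \<alpha> \<mu> \<gamma> E1 = 0 \<and> 0 < P \<and> 0 < 1 - 2 * P
    \<and> loc_asymp_stable (lrc_field \<alpha> \<mu> \<gamma>) E1
    \<and> eigenvalues2 J (\<mu> - \<beta>) (- 2 * \<gamma> * \<mu> / \<beta>)
    \<and> \<mu> - \<beta> < 0 \<and> - 2 * \<gamma> * \<mu> / \<beta> < 0
    \<and> (\<mu> - \<beta> \<noteq> - 2 * \<gamma> * \<mu> / \<beta> \<longrightarrow> stable_node J)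
    \<and> (\<mu> - \<beta> = - 2 * \<gamma> * \<mu> / \<beta> \<longleftrightarrow> 2 * \<gamma> * \<mu> = \<beta> * (\<beta> - \<mu>))
    \<and> (\<mu> - \<beta> = - 2 * \<gamma> * \<mu> / \<beta> \<longrightarrow> stable_star J)"
proof -
  note a = assms(1-3) and b = assms(4,5) and Pd = assms(6) and E = assms(7) and Jd = assms(8)
  have bpos: "\<beta> > 0" using a b by simp
  have Ppos: "P > 0" using bpos b by (simp add: Pd field_simps)
  have C: "1 - P - P = \<mu> / \<beta>" using bpos by (simp add: Pd field_simps)
  have C2: "0 < 1 - 2 * P" using C a bpos by simp
  have fix0: "lrc_field \<alpha> \<mu> \<gamma> E1 = 0"
  proof -
    have "\<alpha> * P * (\<mu> / \<beta>) - \<mu> * P + \<gamma> * P * (\<mu> / \<beta>) = 0"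
      using bpos b by (simp add: field_simps)
    then show ?thesis
      by (simp add: vec_eq_iff forall_2 lrc_comp E C)
  qed
  define Cc where "Cc = 1 - P - P"
  define A where "A = \<alpha>*Cc - \<alpha>*P - \<mu> - \<gamma>*P"
  define B where "B = - \<alpha>*P + \<gamma>*Cc - \<gamma>*P"
  have JM: "J = vector [vector [A, B], vector [B, A]]"
  proof -
    have "(lrc_field \<alpha> \<mu> \<gamma> has_derivative (\<lambda>h. (vector [vector [A, B], vector [B, A]] :: real^2^2) *v h)) (at E1)"
      using lrc_deriv[of \<alpha> \<mu> \<gamma> P P] unfolding E A_def B_def Cc_def by (simp add: algebra_simps)
    then have "frechet_derivative (lrc_field \<alpha> \<mu> \<gamma>) (at E1) = (\<lambda>h. (vector [vector [A, B], vector [B, A]] :: real^2^2) *v h)"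
      by (simp add: frechet_derivative_at[symmetric])
    then show ?thesis by (simp add: Jd jacobian_def)
  qed
  have Cc: "Cc = \<mu> / \<beta>" using C Cc_def by simp
  have e1: "\<beta> * Cc = \<mu>" using bpos by (simp add: Cc)
  have e2: "\<beta> * P = (\<beta> - \<mu>) / 2" using bpos by (simp add: Pd field_simps)
  have "A + B = \<beta> * Cc - 2 * (\<beta> * P) - \<mu>"
    unfolding A_def B_def b(1) by (simp add: algebra_simps)
  then have ApB: "A + B = \<mu> - \<beta>" using e1 e2 by (simp add: field_simps)
  have "A - B = (\<alpha> - \<gamma>) * Cc - \<mu>"
    unfolding A_def B_def by (simp add: algebra_simps)
  also have "\<dots> = - 2 * \<gamma> * \<mu> / \<beta>"
    using bpos b(1) by (simp add: Cc field_simps)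
  finally have AmB: "A - B = - 2 * \<gamma> * \<mu> / \<beta>" .
  have eig: "eigenvalues2 J (\<mu> - \<beta>) (- 2 * \<gamma> * \<mu> / \<beta>)"
    unfolding eigenvalues2_def
  proof
    fix x
    have "det (mat x - J) = (x - A) * (x - A) - B * B"
      by (simp add: JM det_2 mat_def)
    also have "\<dots> = (x - (A + B)) * (x - (A - B))" by (simp add: algebra_simps)
    finally show "det (mat x - J) = (x - (\<mu> - \<beta>)) * (x - (- 2 * \<gamma> * \<mu> / \<beta>))"
      by (simp only: ApB AmB)
  qed
  have l1: "\<mu> - \<beta> < 0" using b by simp
  have l2: "- 2 * \<gamma> * \<mu> / \<beta> < 0" using a bpos by simp
  have node: "\<mu> - \<beta> \<noteq> - 2 * \<gamma> * \<mu> / \<beta> \<longrightarrow> stable_node J"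
    using l1 l2 eig unfolding stable_node_def by blast
  have iff: "\<mu> - \<beta> = - 2 * \<gamma> * \<mu> / \<beta> \<longleftrightarrow> 2 * \<gamma> * \<mu> = \<beta> * (\<beta> - \<mu>)"
    using bpos by (auto simp: field_simps)
  have star: "\<mu> - \<beta> = - 2 * \<gamma> * \<mu> / \<beta> \<longrightarrow> stable_star J"
  proof
    assume "\<mu> - \<beta> = - 2 * \<gamma> * \<mu> / \<beta>"
    then have B0: "B = 0" and AA: "A = \<mu> - \<beta>" using ApB AmB by linarith+
    have "J = mat A"
      by (simp add: JM B0 vec_eq_iff forall_2 mat_def)
    then show "stable_star J" unfolding stable_star_def using AA l1 by (intro exI[of _ A]) auto
  qed
  define \<rho> where "\<rho> = min P (\<gamma> * \<mu> / (\<beta> * (\<bar>\<alpha> - \<gamma>\<bar> + 1)))"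
  define c where "c = min ((\<beta> - \<mu>) / 2) (\<gamma> * \<mu> / \<beta>)"
  define r where "r = \<rho> / 2"
  have rpos: "r > 0" using Ppos a bpos by (simp add: r_def \<rho>_def)
  have cpos: "c > 0" using a bpos b by (simp add: c_def)
  have neg: "inner (z - E1) (lrc_field \<alpha> \<mu> \<gamma> z) \<le> - c * inner (z - E1) (z - E1)"
    if "dist z E1 \<le> r" for z
  proof -
    have "inner (z - E1) (z - E1) = (dist z E1)^2"
      by (simp add: dist_norm power2_norm_eq_inner)
    also have "\<dots> \<le> r^2" using that by (intro power_mono) auto
    finally have W: "(z$1 - P)^2 + (z$2 - P)^2 \<le> (\<rho>/2)^2"
      by (simp add: inner_vec_def sum_2 E r_def power2_eq_square)
    have "(z$1 - P) * (lrc_field \<alpha> \<mu> \<gamma> z $ 1) + (z$2 - P) * (lrc_field \<alpha> \<mu> \<gamma> z $ 2)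
        \<le> - c * ((z$1 - P)^2 + (z$2 - P)^2)"
      unfolding lrc_comp by (rule key_ineq[OF a b Pd \<rho>_def c_def W])
    then show ?thesis by (simp add: inner_vec_def sum_2 E power2_eq_square)
  qed
  have neg0: "inner (z - E1) (lrc_field \<alpha> \<mu> \<gamma> z) \<le> 0" if "dist z E1 \<le> r" for z
  proof -
    have "0 \<le> c * inner (z - E1) (z - E1)" using cpos by simp
    then show ?thesis using neg[OF that] by linarith
  qed
  have las: "loc_asymp_stable (lrc_field \<alpha> \<mu> \<gamma>) E1"
    unfolding loc_asymp_stable_def
  proof (intro conjI allI impI)
    fix \<epsilon> :: real assume "\<epsilon> > 0"
    show "\<exists>\<delta>>0. \<forall>x T. is_solution (lrc_field \<alpha> \<mu> \<gamma>) x {0..T} \<and> dist (x 0) E1 < \<delta>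
         \<longrightarrow> (\<forall>t\<in>{0..T}. dist (x t) E1 < \<epsilon>)"
    proof (intro exI[of _ "min \<epsilon> r"] conjI allI impI)
      show "0 < min \<epsilon> r" using \<open>\<epsilon> > 0\<close> rpos by simp
      fix x T assume h: "is_solution (lrc_field \<alpha> \<mu> \<gamma>) x {0..T} \<and> dist (x 0) E1 < min \<epsilon> r"
      have "\<forall>t\<in>{0..T}. dist (x t) E1 < min \<epsilon> r"
        using h by (intro stay[OF neg0]) auto
      then show "\<forall>t\<in>{0..T}. dist (x t) E1 < \<epsilon>" by auto
    qed
  next
    show "\<exists>\<eta>>0. \<forall>x. is_solution (lrc_field \<alpha> \<mu> \<gamma>) x {0..} \<and> dist (x 0) E1 < \<eta> \<longrightarrow> (x \<longlongrightarrow> E1) at_top"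
      using decay[OF neg cpos] rpos by blast
  qed
  show ?thesis using fix0 Ppos C2 las eig l1 l2 node iff star by blast
qed

end
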